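(* Let $\mathcal{G}=\langle S,A,T,s_0,F\rangle$ be a two-player turn-based deterministic reachability game. For any disjoint $X,Y\subseteq\mathrm{Win}_2(\mathcal{G},F)\setminus F$, we have $\mathrm{DASWin}_1(X,Y)\subseteq\mathrm{DSWin}_1(X,Y)$.
   Context: A two-player turn-based deterministic reachability game is a tuple $\mathcal{G}=\langle S,A,T,s_0,F\rangle$: $S$ finite, partitioned into P1 states $S_1$ and P2 states $S_2$; $A=A_1\cup A_2$ (P1 and P2 actions); $T:(S_1\times A_1)\cup(S_2\times A_2)\to S$ deterministic, possibly partial ($a$ enabled at $s$ iff $T(s,a)$ defined; every state has an enabled action); $s_0$ initial; $F\subseteq S$ a set of sink states (P2's goal). For a target $R$: $Z_0=R$, $Z_{k+1}=Z_k\cup\{s\in S_1:T(s,a)\in Z_k\ \forall\text{ enabled }a\}\cup\{s\in S_2:T(s,a)\in Z_k\text{ for some enabled }a\}$, $\mathrm{Win}_2(\mathcal{G},R)=\bigcup_kZ_k$, $\mathrm{rank}_{\mathcal{G},R}(s)=\min\{k:s\in Z_k\}$ ($\infty$ if none). For disjoint $X,Y\subseteq\mathrm{Win}_2(\mathcal{G},F)\setminus F$ (traps $X$, fake targets $Y$): the true game $\mathcal{G}^1_{X,Y}$ has states $S$ and transitions $T_{X,Y}(q,a)=T(q,a)$ if $q\notin X\cup Y$, $T_{X,Y}(q,a)=q$ if $q\in X\cup Y$; P2's perceptual game $\mathcal{G}^2_{X,Y}$ has transitions $T$ and goal $F\cup Y$, with $\mathrm{rank}_{\mathcal{G}^2_{X,Y}}:=\mathrm{rank}_{\mathcal{G},F\cup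 Y}$. A memoryless randomized strategy of player $i$ maps each $q\in S_i$ to a distribution over enabled actions (deterministic if all are point masses); a pair of strategies and a start state determine the set of generated paths and a probability measure on paths of $\mathcal{G}^1_{X,Y}$. Sure-winning notion: for $q\in S_2\cap\mathrm{Win}_2(\mathcal{G},F)\setminus(F\cup Y)$, $\mathsf{SRActs}_{X,Y}(q)=\{a\text{ enabled}:\mathrm{rank}_{\mathcal{G}^2_{X,Y}}(T(q,a))<\mathrm{rank}_{\mathcal{G}^2_{X,Y}}(q)\}$, and all enabled actions at every other state; a memoryless deterministic strategy is subjectively rationalizable if it always picks an action in $\mathsf{SRActs}_{X,Y}$; a memoryless deterministic P1 strategy $\pi_1$ is stealthy deceptive sure winning at $s$ if it is subjectively rationalizable and for every subjectively rationalizable memoryless deterministic P2 strategy $\pi_2$ every path from $s$ generated by $(\pi_1,\pi_2)$ in $\mathcal{G}^1_{X,Y}$ visits $X\cup Y$ within finitely many steps; $\mathrm{DSWin}_1(X,Y)$ is the set of states where such a strategy exists. Almost-sure notion: for $q\in S_2\cap\mathrm{Win}_2(\mathcal{G},F)\setminus F$, $\widehat{\mathsf{SRActs}}(q)=\{a\text{ enabled}:T(q,a)\in\mathrm{Win}_2(\mathcal{G},F)\}$, and all enabled actions at every other state; a memoryless randomized strategy is subjectively rationalizable if at each of its player's states $q$ its support is a nonempty subset of $\widehat{\mathsf{SRActs}}(q)$; a memoryless randomized P1 strategy $\pi_1$ is stealthy deceptive almost-sure winning at $s$ if it is subjectively rationalizable and for every subjectively rationalizable memoryless randomized P2 strategy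 $\pi_2$ the path of $\mathcal{G}^1_{X,Y}$ from $s$ under $(\pi_1,\pi_2)$ visits $X\cup Y$ with probability one; $\mathrm{DASWin}_1(X,Y)$ is the set of states where such a strategy exists. *)

theory Defs
  imports "HOL-Probability.Probability" "HOL-Library.Extended_Nat"
begin

text \<open>A game: states St partitioned into S1 (player 1) and S2 (player 2),
  actions Act1, Act2, partial deterministic transition function Tr
  (an action a is enabled at s iff Tr s a is not None), initial state,
  and the set Fin of P2-goal sink states.\<close>

record ('s, 'a) game =
  St   :: "'s set"
  S1   :: "'s set"
  S2   :: "'s set"
  Act1 :: "'a set"
  Act2 :: "'a set"
  Tr   :: "'s \<Rightarrow> 'a \<Rightarrow> 's option"
  init :: "'s"
  Fin  :: "'s set"

definition enabled :: "('s, 'a) game \<Rightarrow> 's \<Rightarrow> 'a \<Rightarrow> bool" where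
  "enabled G s a \<longleftrightarrow> Tr G s a \<noteq> None"

definition nxt :: "('s, 'a) game \<Rightarrow> 's \<Rightarrow> 'a \<Rightarrow> 's" where
  "nxt G s a = the (Tr G s a)"

definition reach_game :: "('s, 'a) game \<Rightarrow> bool" where
  "reach_game G \<longleftrightarrow>
     finite (St G) \<and>
     S1 G \<union> S2 G = St G \<and> S1 G \<inter> S2 G = {} \<and>
     (\<forall>s a. Tr G s a \<noteq> None \<longrightarrow>
        (s \<in> S1 G \<and> a \<in> Act1 G) \<or> (s \<in> S2 G \<and> a \<in> Act2 G)) \<and>
     (\<forall>s a s'. Tr G s a = Some s' \<longrightarrow> s' \<in> St G) \<and>
     (\<forall>s \<in> St G. \<exists>a. Tr G s a \<noteq> None) \<and>
     init G \<in> St G \<and>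
     Fin G \<subseteq> St G \<and>
     (\<forall>f \<in> Fin G. \<forall>a s'. Tr G f a = Some s' \<longrightarrow> s' = f)"

fun attr :: "('s, 'a) game \<Rightarrow> 's set \<Rightarrow> nat \<Rightarrow> 's set" where
  "attr G R 0 = R"
| "attr G R (Suc k) = attr G R k
     \<union> {s \<in> S1 G. \<forall>a. enabled G s a \<longrightarrow> nxt G s a \<in> attr G R k}
     \<union> {s \<in> S2 G. \<exists>a. enabled G s a \<and> nxt G s a \<in> attr G R k}"

definition Win2 :: "('s, 'a) game \<Rightarrow> 's set \<Rightarrow> 's set" where
  "Win2 G R = (\<Union>k. attr G R k)"

definition rank :: "('s, 'a) game \<Rightarrow> 's set \<Rightarrow> 's \<Rightarrow> enat" where
  "rank G R s = (if \<exists>k. s \<in> attr G R k then enat (LEAST k. s \<in> attr G R k) else \<infinity>)"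

definition true_game :: "('s, 'a) game \<Rightarrow> 's set \<Rightarrow> 's set \<Rightarrow> ('s, 'a) game" where
  "true_game G X Y = G\<lparr>Tr := (\<lambda>q a. if q \<in> X \<union> Y then map_option (\<lambda>_. q) (Tr G q a)
                                       else Tr G q a)\<rparr>"

definition perc_game :: "('s, 'a) game \<Rightarrow> 's set \<Rightarrow> 's set \<Rightarrow> ('s, 'a) game" where
  "perc_game G X Y = G\<lparr>Fin := Fin G \<union> Y\<rparr>"

definition perc_rank :: "('s, 'a) game \<Rightarrow> 's set \<Rightarrow> 's set \<Rightarrow> 's \<Rightarrow> enat" where
  "perc_rank G X Y = rank (perc_game G X Y) (Fin (perc_game G X Y))"

definition SRActs :: "('s, 'a) game \<Rightarrow> 's set \<Rightarrow> 's set \<Rightarrow> 's \<Rightarrow> 'a set" where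
  "SRActs G X Y q =
     (if q \<in> S2 G \<inter> Win2 G (Fin G) - (Fin G \<union> Y)
      then {a. enabled G q a \<and> perc_rank G X Y (nxt G q a) < perc_rank G X Y q}
      else {a. enabled G q a})"

definition sr_det :: "('s, 'a) game \<Rightarrow> 's set \<Rightarrow> 's set \<Rightarrow> 's set \<Rightarrow> ('s \<Rightarrow> 'a) \<Rightarrow> bool" where
  "sr_det G X Y Ps \<sigma> \<longleftrightarrow> (\<forall>q \<in> Ps. \<sigma> q \<in> SRActs G X Y q)"

definition gen_path :: "('s, 'a) game \<Rightarrow> ('s \<Rightarrow> 'a) \<Rightarrow> ('s \<Rightarrow> 'a) \<Rightarrow> 's \<Rightarrow> (nat \<Rightarrow> 's) \<Rightarrow> bool" where
  "gen_path H \<sigma>1 \<sigma>2 s \<rho> \<longleftrightarrow>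
     \<rho> 0 = s \<and>
     (\<forall>n. Tr H (\<rho> n) (if \<rho> n \<in> S1 H then \<sigma>1 (\<rho> n) else \<sigma>2 (\<rho> n)) = Some (\<rho> (Suc n)))"

definition DSWin1 :: "('s, 'a) game \<Rightarrow> 's set \<Rightarrow> 's set \<Rightarrow> 's set" where
  "DSWin1 G X Y = {s \<in> St G. \<exists>\<sigma>1. sr_det G X Y (S1 G) \<sigma>1 \<and>
      (\<forall>\<sigma>2. sr_det G X Y (S2 G) \<sigma>2 \<longrightarrow>
         (\<forall>\<rho>. gen_path (true_game G X Y) \<sigma>1 \<sigma>2 s \<rho> \<longrightarrow> (\<exists>n. \<rho> n \<in> X \<union> Y)))}"

definition SRActs_as :: "('s, 'a) game \<Rightarrow> 's \<Rightarrow> 'a set" where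
  "SRActs_as G q =
     (if q \<in> S2 G \<inter> Win2 G (Fin G) - Fin G
      then {a. enabled G q a \<and> nxt G q a \<in> Win2 G (Fin G)}
      else {a. enabled G q a})"

text \<open>Memoryless randomized strategy: map from states to distributions over actions.
  Subjectively rationalizable: support contained in SRActs_as (pmf supports are nonempty).\<close>
definition sr_rand :: "('s, 'a) game \<Rightarrow> 's set \<Rightarrow> ('s \<Rightarrow> 'a pmf) \<Rightarrow> bool" where
  "sr_rand G Ps \<pi> \<longleftrightarrow> (\<forall>q \<in> Ps. set_pmf (\<pi> q) \<subseteq> SRActs_as G q)"

definition kernel :: "('s, 'a) game \<Rightarrow> ('s \<Rightarrow> 'a pmf) \<Rightarrow> ('s \<Rightarrow> 'a pmf) \<Rightarrow> 's \<Rightarrow> 's pmf" where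
  "kernel H \<pi>1 \<pi>2 q = map_pmf (nxt H q) (if q \<in> S1 H then \<pi>1 q else \<pi>2 q)"

text \<open>Distribution of the finite path prefix [\<rho>0, ..., \<rho>n] of the induced path measure.\<close>
fun prefix_pmf :: "('s, 'a) game \<Rightarrow> ('s \<Rightarrow> 'a pmf) \<Rightarrow> ('s \<Rightarrow> 'a pmf) \<Rightarrow> nat \<Rightarrow> 's \<Rightarrow> 's list pmf" where
  "prefix_pmf H \<pi>1 \<pi>2 0 q = return_pmf [q]"
| "prefix_pmf H \<pi>1 \<pi>2 (Suc n) q =
     bind_pmf (kernel H \<pi>1 \<pi>2 q) (\<lambda>q'. map_pmf (Cons q) (prefix_pmf H \<pi>1 \<pi>2 n q'))"

text \<open>Probability that the path from s visits Z: by continuity of the path measure,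
  the supremum over n of the probability of visiting Z within the first n steps.\<close>
definition prob_visit :: "('s, 'a) game \<Rightarrow> ('s \<Rightarrow> 'a pmf) \<Rightarrow> ('s \<Rightarrow> 'a pmf) \<Rightarrow> 's \<Rightarrow> 's set \<Rightarrow> real" where
  "prob_visit H \<pi>1 \<pi>2 s Z =
     (SUP n. measure_pmf.prob (prefix_pmf H \<pi>1 \<pi>2 n s) {xs. \<exists>x \<in> set xs. x \<in> Z})"

definition DASWin1 :: "('s, 'a) game \<Rightarrow> 's set \<Rightarrow> 's set \<Rightarrow> 's set" where
  "DASWin1 G X Y = {s \<in> St G. \<exists>\<pi>1. sr_rand G (S1 G) \<pi>1 \<and>
      (\<forall>\<pi>2. sr_rand G (S2 G) \<pi>2 \<longrightarrow>
         prob_visit (true_game G X Y) \<pi>1 \<pi>2 s (X \<union> Y) = 1)}"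

end

theory Submission
  imports Defs
begin

fun P1attr :: "('s, 'a) game \<Rightarrow> 's set \<Rightarrow> 's set \<Rightarrow> nat \<Rightarrow> 's set" where
  "P1attr G X Y 0 = X \<union> Y"
| "P1attr G X Y (Suc k) = P1attr G X Y k
     \<union> {q \<in> S1 G. \<exists>a. enabled G q a \<and> nxt G q a \<in> P1attr G X Y k}
     \<union> {q \<in> S2 G. \<forall>a \<in> SRActs G X Y q. nxt G q a \<in> P1attr G X Y k}"

lemma finite_ub:
  fixes A :: "nat \<Rightarrow> 's set"
  assumes "finite N" "N \<subseteq> (\<Union>k. A k)" "\<And>k. A k \<subseteq> A (Suc k)"
  shows "\<exists>K. N \<subseteq> A K"
  using assms(1,2)
proof (induction N rule: finite_induct)
  case empty
  then show ?case by auto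
next
  case (insert x F)
  then obtain K where K: "F \<subseteq> A K" by auto
  from insert obtain k where k: "x \<in> A k" by auto
  have "A K \<subseteq> A (max K k)" "A k \<subseteq> A (max K k)"
    using lift_Suc_mono_le[of A, OF assms(3)] by auto
  then show ?case using K k by blast
qed

lemma rg_facts:
  assumes "reach_game G"
  shows "finite (St G)" "S1 G \<union> S2 G = St G" "S1 G \<inter> S2 G = {}"
    "\<And>s a s'. Tr G s a = Some s' \<Longrightarrow> s' \<in> St G"
    "\<And>s. s \<in> St G \<Longrightarrow> \<exists>a. enabled G s a"
proof -
  note h = assms[unfolded reach_game_def]
  show "finite (St G)" by (rule h[THEN conjunct1])
  show "S1 G \<union> S2 G = St G" by (rule h[THEN conjunct2, THEN conjunct1])
  show "S1 G \<inter> S2 G = {}" by (rule h[THEN conjunct2, THEN conjunct2, THEN conjunct1])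
  have h4: "\<forall>s a s'. Tr G s a = Some s' \<longrightarrow> s' \<in> St G"
    by (rule h[THEN conjunct2, THEN conjunct2, THEN conjunct2, THEN conjunct2, THEN conjunct1])
  have h5: "\<forall>s\<in>St G. \<exists>a. Tr G s a \<noteq> None"
    by (rule h[THEN conjunct2, THEN conjunct2, THEN conjunct2, THEN conjunct2, THEN conjunct2, THEN conjunct1])
  show "\<And>s a s'. Tr G s a = Some s' \<Longrightarrow> s' \<in> St G" using h4 by blast
  show "\<And>s. s \<in> St G \<Longrightarrow> \<exists>a. enabled G s a" using h5 unfolding enabled_def by blast
qed

lemma rg_nxt_St:
  assumes "reach_game G" "enabled G q a"
  shows "nxt G q a \<in> St G"
proof -
  obtain y where "Tr G q a = Some y" using assms(2) unfolding enabled_def by blast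
  then show ?thesis using rg_facts(4)[OF assms(1)] unfolding nxt_def by simp
qed

lemma rg_fin_succ:
  assumes "reach_game G" and that: "P \<subseteq> {a. enabled G q a}"
  shows "finite (nxt G q ` P)"
proof -
  have "nxt G q ` P \<subseteq> St G" using that rg_nxt_St[OF assms(1)] by auto
  then show ?thesis using rg_facts(1)[OF assms(1)] by (rule finite_subset)
qed

lemma perc_eqs:
  "enabled (perc_game G X Y) = enabled G" "nxt (perc_game G X Y) = nxt G"
  "S1 (perc_game G X Y) = S1 G" "S2 (perc_game G X Y) = S2 G"
  by (simp_all add: perc_game_def enabled_def[abs_def] nxt_def[abs_def])

lemma attr_perc: "attr (perc_game G X Y) R k = attr G R k"
proof (induction k)
  case 0 show ?case by (simp only: attr.simps)
next
  case (Suc k)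
  show ?case by (simp only: attr.simps perc_eqs Suc.IH)
qed

lemma attr_mono_Suc: "attr G R k \<subseteq> attr G R (Suc k)"
  by auto

lemma attr_Suc_iff:
  "q \<in> attr G R (Suc k) \<longleftrightarrow> q \<in> attr G R k \<or> (q \<in> S1 G \<and> (\<forall>a. enabled G q a \<longrightarrow> nxt G q a \<in> attr G R k))
     \<or> (q \<in> S2 G \<and> (\<exists>a. enabled G q a \<and> nxt G q a \<in> attr G R k))"
  by (simp only: attr.simps Un_iff mem_Collect_eq disj_assoc)

lemma attr_closed:
  assumes rg: "reach_game G" and R: "R \<subseteq> Win2 G (Fin G)"
  shows "attr G R k \<subseteq> Win2 G (Fin G)"
proof (induction k)
  case 0
  then show ?case using R by (simp only: attr.simps)
next
  case (Suc k)
  have "q \<in> Win2 G (Fin G)" if q: "q \<in> attr G R (Suc k)" for q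
  proof -
    have "q \<in> attr G R k \<or> (q \<in> S1 G \<and> (\<forall>a. enabled G q a \<longrightarrow> nxt G q a \<in> attr G R k))
     \<or> (q \<in> S2 G \<and> (\<exists>a. enabled G q a \<and> nxt G q a \<in> attr G R k))"
      using q by (simp only: attr_Suc_iff)
    then consider "q \<in> attr G R k"
      | "q \<in> S1 G" "\<forall>a. enabled G q a \<longrightarrow> nxt G q a \<in> attr G R k"
      | "q \<in> S2 G" "\<exists>a. enabled G q a \<and> nxt G q a \<in> attr G R k"
      by blast
    then show ?thesis
    proof cases
      case 1 then show ?thesis using Suc.IH by blast
    next
      case 2
      let ?N = "nxt G q ` {a. enabled G q a}"
      have fin: "finite ?N" by (rule rg_fin_succ[OF rg]) (rule subset_refl)
      have sub: "?N \<subseteq> (\<Union>j. attr G (Fin G) j)" using 2 Suc.IH unfolding Win2_def by blast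
      obtain K where K: "?N \<subseteq> attr G (Fin G) K"
        using finite_ub[of ?N "attr G (Fin G)", OF fin sub attr_mono_Suc] by blast
      have "\<forall>a. enabled G q a \<longrightarrow> nxt G q a \<in> attr G (Fin G) K" using K by blast
      then have "q \<in> attr G (Fin G) (Suc K)" using 2(1) attr_Suc_iff[of q G "Fin G" K] by blast
      then show ?thesis unfolding Win2_def by blast
    next
      case 3
      then obtain a where a: "enabled G q a" "nxt G q a \<in> attr G R k" by blast
      then obtain j where j: "nxt G q a \<in> attr G (Fin G) j" using Suc.IH unfolding Win2_def by blast
      have "q \<in> attr G (Fin G) (Suc j)" using 3(1) a(1) j attr_Suc_iff[of q G "Fin G" j] by blast
      then show ?thesis unfolding Win2_def by blast
    qed
  qed
  then show ?case by blast
qed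

lemma SRActs_enabled: "a \<in> SRActs G X Y q \<Longrightarrow> enabled G q a"
  unfolding SRActs_def by (auto split: if_splits)

lemma SRActs_sub:
  assumes rg: "reach_game G" and Yw: "Y \<subseteq> Win2 G (Fin G) - Fin G"
    and q: "q \<in> S2 G" "q \<notin> Y"
  shows "SRActs G X Y q \<subseteq> SRActs_as G q"
proof (cases "q \<in> S2 G \<inter> Win2 G (Fin G) - (Fin G \<union> Y)")
  case True
  have SR: "SRActs G X Y q = {a. enabled G q a \<and> perc_rank G X Y (nxt G q a) < perc_rank G X Y q}"
    unfolding SRActs_def if_P[OF True] ..
  have c2: "q \<in> S2 G \<inter> Win2 G (Fin G) - Fin G" using True by blast
  have SA: "SRActs_as G q = {a. enabled G q a \<and> nxt G q a \<in> Win2 G (Fin G)}"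
    unfolding SRActs_as_def if_P[OF c2] ..
  have "nxt G q a \<in> Win2 G (Fin G)" if a: "a \<in> SRActs G X Y q" for a
  proof -
    from a have lt: "perc_rank G X Y (nxt G q a) < perc_rank G X Y q"
      unfolding SR by blast
    then obtain i where i: "perc_rank G X Y (nxt G q a) = enat i" by (cases "perc_rank G X Y (nxt G q a)") auto
    have "\<exists>k. nxt G q a \<in> attr (perc_game G X Y) (Fin (perc_game G X Y)) k"
    proof (rule ccontr)
      assume "\<not> ?thesis"
      then have "perc_rank G X Y (nxt G q a) = \<infinity>" unfolding perc_rank_def rank_def by simp
      then show False using i by simp
    qed
    then obtain k where "nxt G q a \<in> attr (perc_game G X Y) (Fin (perc_game G X Y)) k" by blast
    then have "nxt G q a \<in> attr G (Fin G \<union> Y) k"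
      using attr_perc[of G X Y "Fin (perc_game G X Y)" k] by (simp add: perc_game_def)
    moreover have "Fin G \<union> Y \<subseteq> Win2 G (Fin G)"
      using Yw attr.simps(1)[of G "Fin G"] unfolding Win2_def by blast
    ultimately show ?thesis using attr_closed[OF rg] by blast
  qed
  then show ?thesis unfolding SA using SR by blast
next
  case False
  have SR: "SRActs G X Y q = {a. enabled G q a}"
    unfolding SRActs_def if_not_P[OF False] ..
  have c2: "\<not> (q \<in> S2 G \<inter> Win2 G (Fin G) - Fin G)" using False q by blast
  have SA: "SRActs_as G q = {a. enabled G q a}"
    unfolding SRActs_as_def if_not_P[OF c2] ..
  show ?thesis unfolding SR SA ..
qed

lemma SRActs_as_ne:
  assumes rg: "reach_game G" and q: "q \<in> S2 G"
  shows "\<exists>a. a \<in> SRActs_as G q"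
proof (cases "q \<in> S2 G \<inter> Win2 G (Fin G) - Fin G")
  case True
  then obtain k where k: "q \<in> attr G (Fin G) k" unfolding Win2_def by blast
  have disj: "S1 G \<inter> S2 G = {}" by (rule rg_facts(3)[OF rg])
  have "q \<in> attr G (Fin G) k \<Longrightarrow> q \<notin> Fin G \<Longrightarrow> \<exists>a. enabled G q a \<and> nxt G q a \<in> Win2 G (Fin G)"
  proof (induction k)
    case 0 then show ?case by (simp only: attr.simps)
  next
    case (Suc k)
    have "q \<in> attr G (Fin G) k \<or> (q \<in> S1 G \<and> (\<forall>a. enabled G q a \<longrightarrow> nxt G q a \<in> attr G (Fin G) k))
     \<or> (q \<in> S2 G \<and> (\<exists>a. enabled G q a \<and> nxt G q a \<in> attr G (Fin G) k))"
      using Suc.prems(1) by (simp only: attr_Suc_iff)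
    then consider "q \<in> attr G (Fin G) k" | "q \<in> S1 G"
      | "\<exists>a. enabled G q a \<and> nxt G q a \<in> attr G (Fin G) k" by blast
    then show ?case
    proof cases
      case 1 then show ?thesis using Suc.IH Suc.prems(2) by blast
    next
      case 2 then show ?thesis using q disj by blast
    next
      case 3
      then obtain a where "enabled G q a" "nxt G q a \<in> attr G (Fin G) k" by blast
      moreover have "attr G (Fin G) k \<subseteq> Win2 G (Fin G)" unfolding Win2_def by blast
      ultimately show ?thesis by blast
    qed
  qed
  then have "\<exists>a. enabled G q a \<and> nxt G q a \<in> Win2 G (Fin G)" using True k by blast
  then show ?thesis unfolding SRActs_as_def if_P[OF True] by blast
next
  case False
  have "q \<in> St G" using rg_facts(2)[OF rg] q by blast
  have "\<exists>a. enabled G q a" using rg_facts(5)[OF rg \<open>q \<in> St G\<close>] .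
  then show ?thesis unfolding SRActs_as_def if_not_P[OF False] by blast
qed

lemma P1attr_S1:
  assumes "q \<in> P1attr G X Y (Suc i)" "q \<notin> P1attr G X Y i" "q \<in> S1 G" "S1 G \<inter> S2 G = {}"
  shows "\<exists>a. enabled G q a \<and> nxt G q a \<in> P1attr G X Y i"
  using assms by auto

lemma P1attr_S2:
  assumes "q \<in> P1attr G X Y (Suc i)" "q \<notin> P1attr G X Y i" "q \<notin> S1 G"
  shows "q \<in> S2 G \<and> (\<forall>a \<in> SRActs G X Y q. nxt G q a \<in> P1attr G X Y i)"
  using assms by auto

lemma P1attr_in_S1: "q \<in> S1 G \<Longrightarrow> enabled G q a \<Longrightarrow> nxt G q a \<in> P1attr G X Y k \<Longrightarrow> q \<in> P1attr G X Y (Suc k)"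
  by (simp only: P1attr.simps) blast

lemma P1attr_in_S2: "q \<in> S2 G \<Longrightarrow> \<forall>a \<in> SRActs G X Y q. nxt G q a \<in> P1attr G X Y k \<Longrightarrow> q \<in> P1attr G X Y (Suc k)"
  by (simp only: P1attr.simps) blast

lemma P1attr_mono: "P1attr G X Y k \<subseteq> P1attr G X Y (Suc k)"
  by (simp only: P1attr.simps) blast

theorem theorem7:
  fixes G :: "('s, 'a) game" and X Y :: "'s set"
  assumes "reach_game G"
    and "X \<subseteq> Win2 G (Fin G) - Fin G"
    and "Y \<subseteq> Win2 G (Fin G) - Fin G"
    and "X \<inter> Y = {}"
  shows "DASWin1 G X Y \<subseteq> DSWin1 G X Y"
proof
  fix s assume "s \<in> DASWin1 G X Y"
  then obtain \<pi>1 where s: "s \<in> St G" and \<pi>1: "sr_rand G (S1 G) \<pi>1"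
    and win: "\<forall>\<pi>2. sr_rand G (S2 G) \<pi>2 \<longrightarrow> prob_visit (true_game G X Y) \<pi>1 \<pi>2 s (X \<union> Y) = 1"
    unfolding DASWin1_def by auto
  note rg = assms(1)
  define A where "A = P1attr G X Y"
  define W where "W = (\<Union>k. A k)"
  have disj: "S1 G \<inter> S2 G = {}" and cover: "S1 G \<union> S2 G = St G"
    using rg_facts(2,3)[OF rg] by blast+
  have ex_en: "\<exists>a. enabled G q a" if "q \<in> St G" for q
    using rg_facts(5)[OF rg that] .
  have A0: "A 0 = X \<union> Y" unfolding A_def by simp
  have ASuc: "A (Suc k) = A k
     \<union> {q \<in> S1 G. \<exists>a. enabled G q a \<and> nxt G q a \<in> A k}
     \<union> {q \<in> S2 G. \<forall>a \<in> SRActs G X Y q. nxt G q a \<in> A k}" for k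
    unfolding A_def by simp
  have ZW: "X \<union> Y \<subseteq> W" unfolding W_def using A0 by blast
  show "s \<in> DSWin1 G X Y"
  proof (cases "s \<in> W")
    case True
    define r where "r q = (LEAST k. q \<in> A k)" for q
    define \<sigma>1 where "\<sigma>1 q = (SOME a. enabled G q a \<and> (q \<in> W - A 0 \<longrightarrow> nxt G q a \<in> A (r q - 1)))" for q
    have \<sigma>1: "enabled G q (\<sigma>1 q) \<and> (q \<in> W - A 0 \<longrightarrow> nxt G q (\<sigma>1 q) \<in> A (r q - 1))"
      if q1: "q \<in> S1 G" for q
    proof -
      have "\<exists>a. enabled G q a \<and> (q \<in> W - A 0 \<longrightarrow> nxt G q a \<in> A (r q - 1))"
      proof (cases "q \<in> W - A 0")
        case True
        then obtain k where k: "q \<in> A k" unfolding W_def by auto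
        then have rk: "q \<in> A (r q)" unfolding r_def by (rule LeastI)
        have "r q \<noteq> 0"
        proof
          assume "r q = 0"
          then have "q \<in> A 0" using rk by simp
          then show False using True by blast
        qed
        then obtain i where i: "r q = Suc i" by (cases "r q") auto
        have "q \<notin> A i" using i not_less_Least[of i "\<lambda>k. q \<in> A k"] unfolding r_def by auto
        then have "\<exists>a. enabled G q a \<and> nxt G q a \<in> A i" using P1attr_S1[of q G X Y i] rk i q1 disj unfolding A_def by auto
        then show ?thesis using i by auto
      next
        case False
        have "q \<in> St G" using q1 cover by auto
        then obtain a where "enabled G q a" using ex_en by blast
        then show ?thesis using False by auto
      qed
      then show ?thesis unfolding \<sigma>1_def by (rule someI_ex)
    qed
    have sr1: "sr_det G X Y (S1 G) \<sigma>1" unfolding sr_det_def SRActs_def using \<sigma>1 disj by auto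
    have reach: "\<exists>m. \<rho> m \<in> X \<union> Y"
      if sr2: "sr_det G X Y (S2 G) \<sigma>2" and gp: "gen_path (true_game G X Y) \<sigma>1 \<sigma>2 s \<rho>" for \<sigma>2 \<rho>
    proof -
      have step: "Tr (true_game G X Y) (\<rho> n) (if \<rho> n \<in> S1 G then \<sigma>1 (\<rho> n) else \<sigma>2 (\<rho> n)) = Some (\<rho> (Suc n))" for n
        using gp unfolding gen_path_def true_game_def by simp
      have "\<forall>n. \<rho> n \<in> A j \<longrightarrow> (\<exists>m. \<rho> m \<in> X \<union> Y)" for j
      proof (induction j rule: less_induct)
        case (less j)
        show ?case
        proof (intro allI impI)
          fix n assume nj: "\<rho> n \<in> A j"
          let ?q = "\<rho> n"
          have rq: "?q \<in> A (r ?q)" unfolding r_def using nj by (rule LeastI)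
          have rle: "r ?q \<le> j" unfolding r_def using nj by (rule Least_le)
          show "\<exists>m. \<rho> m \<in> X \<union> Y"
          proof (cases "?q \<in> X \<union> Y")
            case True then show ?thesis by blast
          next
            case notZ: False
            then have "r ?q \<noteq> 0" using rq A0 by auto
            then obtain i where i: "r ?q = Suc i" by (cases "r ?q") auto
            have ni: "?q \<notin> A i" using i not_less_Least[of i "\<lambda>k. \<rho> n \<in> A k"] unfolding r_def by auto
            have TrG: "Tr G ?q (if ?q \<in> S1 G then \<sigma>1 ?q else \<sigma>2 ?q) = Some (\<rho> (Suc n))"
              using step[of n] notZ unfolding true_game_def by simp
            have "\<rho> (Suc n) \<in> A i"
            proof (cases "?q \<in> S1 G")
              case True
              have "?q \<in> W - A 0" using rq notZ A0 unfolding W_def by auto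
              then have "nxt G ?q (\<sigma>1 ?q) \<in> A i" using \<sigma>1[OF True] i by auto
              moreover have "nxt G ?q (\<sigma>1 ?q) = \<rho> (Suc n)" using TrG True unfolding nxt_def by simp
              ultimately show ?thesis by simp
            next
              case False
              then have q2: "?q \<in> S2 G" and all2: "\<forall>a \<in> SRActs G X Y ?q. nxt G ?q a \<in> A i"
                using P1attr_S2[of ?q G X Y i] rq ni i unfolding A_def by auto
              have "\<sigma>2 ?q \<in> SRActs G X Y ?q" using sr2 q2 unfolding sr_det_def by auto
              moreover have "nxt G ?q (\<sigma>2 ?q) = \<rho> (Suc n)" using TrG False unfolding nxt_def by simp
              ultimately show ?thesis using all2 by auto
            qed
            then show ?thesis using less[of i] i rle by auto
          qed
        qed
      qed
      then show ?thesis using True gp unfolding W_def gen_path_def by auto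
    qed
    have "\<forall>\<sigma>2. sr_det G X Y (S2 G) \<sigma>2 \<longrightarrow>
         (\<forall>\<rho>. gen_path (true_game G X Y) \<sigma>1 \<sigma>2 s \<rho> \<longrightarrow> (\<exists>n. \<rho> n \<in> X \<union> Y))"
      using reach by blast
    then show ?thesis unfolding DSWin1_def using s sr1 by blast
  next
    case False
    have S1out: "nxt G q a \<notin> W" if "q \<in> S1 G" "q \<notin> W" "enabled G q a" for q a
    proof
      assume "nxt G q a \<in> W"
      then obtain k where "nxt G q a \<in> A k" unfolding W_def by auto
      then have "q \<in> A (Suc k)" unfolding A_def by (rule P1attr_in_S1[OF that(1) that(3)])
      then show False using that unfolding W_def by blast
    qed
    have S2out: "\<exists>a \<in> SRActs G X Y q. nxt G q a \<notin> W" if q2: "q \<in> S2 G" and qW: "q \<notin> W" for q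
    proof (rule ccontr)
      assume "\<not> (\<exists>a \<in> SRActs G X Y q. nxt G q a \<notin> W)"
      then have N: "nxt G q ` SRActs G X Y q \<subseteq> (\<Union>k. A k)" unfolding W_def by auto
      have "SRActs G X Y q \<subseteq> {a. enabled G q a}" by (rule subsetI) (simp add: SRActs_enabled)
      then have "finite (nxt G q ` SRActs G X Y q)"
        by (rule rg_fin_succ[OF rg])
      moreover have "A k \<subseteq> A (Suc k)" for k unfolding A_def by (rule P1attr_mono)
      ultimately obtain K where "nxt G q ` SRActs G X Y q \<subseteq> A K"
        using finite_ub[OF _ N] by blast
      then have "q \<in> A (Suc K)" using q2 P1attr_in_S2[of q G X Y K] unfolding A_def by blast
      then show False using qW unfolding W_def by blast
    qed
    define \<sigma>2 where "\<sigma>2 q = (if q \<notin> W then SOME a. a \<in> SRActs G X Y q \<and> nxt G q a \<notin> W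
                               else SOME a. a \<in> SRActs_as G q)" for q
    define \<pi>2 where "\<pi>2 q = return_pmf (\<sigma>2 q)" for q
    have \<sigma>2out: "\<sigma>2 q \<in> SRActs G X Y q \<and> nxt G q (\<sigma>2 q) \<notin> W" if "q \<in> S2 G" "q \<notin> W" for q
    proof -
      have ex: "\<exists>a. a \<in> SRActs G X Y q \<and> nxt G q a \<notin> W" using S2out[OF that] by blast
      have eq: "\<sigma>2 q = (SOME a. a \<in> SRActs G X Y q \<and> nxt G q a \<notin> W)" using that(2) unfolding \<sigma>2_def by simp
      show ?thesis unfolding eq by (rule someI_ex[OF ex])
    qed
    have sr2: "sr_rand G (S2 G) \<pi>2"
      unfolding sr_rand_def \<pi>2_def
    proof
      fix q assume q2: "q \<in> S2 G"
      show "set_pmf (return_pmf (\<sigma>2 q)) \<subseteq> SRActs_as G q"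
      proof (cases "q \<in> W")
        case True
        then have eq: "\<sigma>2 q = (SOME a. a \<in> SRActs_as G q)" unfolding \<sigma>2_def by simp
        show ?thesis unfolding eq using someI_ex[OF SRActs_as_ne[OF rg q2]] by simp
      next
        case False
        then have "q \<notin> Y" using ZW by auto
        then show ?thesis using \<sigma>2out[OF q2 False] SRActs_sub[OF rg assms(3) q2] by auto
      qed
    qed
    let ?H = "true_game G X Y"
    have inv: "\<forall>xs \<in> set_pmf (prefix_pmf ?H \<pi>1 \<pi>2 n q). \<forall>x \<in> set xs. x \<notin> W"
      if "q \<in> St G" "q \<notin> W" for n q
      using that
    proof (induction n arbitrary: q)
      case 0
      then show ?case by simp
    next
      case (Suc n)
      have nZ: "q \<notin> X \<union> Y" using Suc.prems ZW by auto
      have succ: "q' \<in> St G \<and> q' \<notin> W" if q'k: "q' \<in> set_pmf (kernel ?H \<pi>1 \<pi>2 q)" for q'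
      proof -
        have nxtH: "nxt ?H q = nxt G q" by (rule ext) (use nZ in \<open>simp add: nxt_def true_game_def\<close>)
        have S1H: "S1 ?H = S1 G" unfolding true_game_def by simp
        obtain a where a: "a \<in> set_pmf (if q \<in> S1 G then \<pi>1 q else \<pi>2 q)" "q' = nxt G q a"
        proof -
          have "q' \<in> nxt G q ` set_pmf (if q \<in> S1 G then \<pi>1 q else \<pi>2 q)"
            using q'k unfolding kernel_def S1H nxtH by simp
          then show ?thesis using that by blast
        qed
        show ?thesis
        proof (cases "q \<in> S1 G")
          case True
          then have "a \<in> SRActs_as G q" using a \<pi>1 unfolding sr_rand_def by auto
          then have en: "enabled G q a"
          proof -
            assume asa: "a \<in> SRActs_as G q"
            have c: "\<not> (q \<in> S2 G \<inter> Win2 G (Fin G) - Fin G)" using True disj by blast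
            show ?thesis using asa unfolding SRActs_as_def if_not_P[OF c] by simp
          qed
          then show ?thesis using a True S1out[OF True Suc.prems(2)] rg_nxt_St[OF rg] by auto
        next
          case False
          then have q2: "q \<in> S2 G" using Suc.prems cover by auto
          have "a = \<sigma>2 q" using a False unfolding \<pi>2_def by auto
          have s2: "\<sigma>2 q \<in> SRActs G X Y q" and nw: "nxt G q (\<sigma>2 q) \<notin> W"
            using \<sigma>2out[OF q2 Suc.prems(2)] by auto
          have "enabled G q (\<sigma>2 q)" by (rule SRActs_enabled[OF s2])
          then have "nxt G q (\<sigma>2 q) \<in> St G" by (rule rg_nxt_St[OF rg])
          then show ?thesis using nw a(2) \<open>a = \<sigma>2 q\<close> by simp
        qed
      qed
      show ?case
      proof
        fix xs assume "xs \<in> set_pmf (prefix_pmf ?H \<pi>1 \<pi>2 (Suc n) q)"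
        then obtain q' xs' where q': "q' \<in> set_pmf (kernel ?H \<pi>1 \<pi>2 q)"
          and xs': "xs' \<in> set_pmf (prefix_pmf ?H \<pi>1 \<pi>2 n q')" and xs: "xs = q # xs'" by auto
        show "\<forall>x \<in> set xs. x \<notin> W" using Suc.IH[of q'] succ[OF q'] xs' xs Suc.prems by auto
      qed
    qed
    have zero: "measure_pmf.prob (prefix_pmf ?H \<pi>1 \<pi>2 n s) {xs. \<exists>x \<in> set xs. x \<in> X \<union> Y} = 0" for n
      unfolding measure_pmf_zero_iff using inv[OF s False, of n] ZW by blast
    have "prob_visit ?H \<pi>1 \<pi>2 s (X \<union> Y) = 0"
      unfolding prob_visit_def zero by simp
    then show ?thesis using win sr2 by auto
  qed
qed

end
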